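(* Let $\mathcal{P}$ be a measurable space of distributions on a measurable space $\mathcal{Z}$, let $P_0$ be a distribution on $\mathcal{Z}$ and let $Z_1,\dots,Z_n\overset{\mathrm{iid}}{\sim}P_0$. Let $\epsilon>0$ and $B:=B(P_0,\epsilon)=\{P\in\mathcal{P}:\mathrm{KL}(P_0,P)\le\epsilon^2,\mathrm{V}_2(P_0,P)\le\epsilon^2\}$. For $i\in[n]$ and $P\in\mathcal{P}$ with $P\ll P_0$, let $W(P,Z_i):=\log\frac{\mathrm{d}P}{\mathrm{d}P_0}(Z_i)-\mathbb{E}\log\frac{\mathrm{d}P}{\mathrm{d}P_0}(Z_i)$. Assume there exist $a,c>0$ such that for all $P\in B$, $W(P,Z_1)$ is sub-Gamma in the left tail with variance parameter $a\epsilon^2$ and scale parameter $c$. Then for any probability measure $\Pi$ on $\mathcal{P}$ and any $D>0$, with $P_0^{\otimes n}$-probability at most $\exp\big(-\frac{D^2n\epsilon^2}{2(a+cD)}\big)$, $$\int_B\prod_{i=1}^n\frac{\mathrm{d}P}{\mathrm{d}P_0}(Z_i)\,\mathrm{d}\Pi(P)<\Pi(B)e^{-(1+D)n\epsilon^2}.$$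
   Context: $\mathrm{KL}(P,Q)=\int\log\frac{\mathrm{d}P}{\mathrm{d}Q}\,\mathrm{d}P$ and $\mathrm{V}_2(P,Q)=\int(\log\frac{\mathrm{d}P}{\mathrm{d}Q}-\mathrm{KL}(P,Q))^2\mathrm{d}P$ if $P\ll Q$, and both are $\infty$ otherwise. A zero-mean random variable $V$ is sub-Gamma in the right tail with variance parameter $s^2$ and scale $c$ if $\mathbb{E}e^{\lambda V}\le\exp(s^2\lambda^2/(2(1-c\lambda)))$ for all $\lambda\in[0,1/c)$; it is sub-Gamma in the left tail if $-V$ is sub-Gamma in the right tail. *)

theory Defs
  imports "HOL-Probability.Probability"
begin

text \<open>Kullback-Leibler divergence KL(P,Q) = int log(dP/dQ) dP if P << Q, and infinity otherwise.
  (For probability measures the negative part of the integrand is always P-integrable, so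
  non-integrability means the integral is +infinity.)  Note: in the library,
  absolutely_continuous Q P means P << Q.\<close>
definition KL_div :: "'a measure \<Rightarrow> 'a measure \<Rightarrow> ereal" where
  "KL_div P Q =
     (if absolutely_continuous Q P \<and> sets P = sets Q
         \<and> integrable P (\<lambda>x. ln (enn2real (RN_deriv Q P x)))
      then ereal (\<integral>x. ln (enn2real (RN_deriv Q P x)) \<partial>P)
      else \<infinity>)"

definition V2_div :: "'a measure \<Rightarrow> 'a measure \<Rightarrow> ereal" where
  "V2_div P Q =
     (let L = (\<lambda>x. ln (enn2real (RN_deriv Q P x))); K = (\<integral>x. L x \<partial>P) in
      if absolutely_continuous Q P \<and> sets P = sets Q \<and> integrable P L
         \<and> integrable P (\<lambda>x. (L x - K)\<^sup>2)
      then ereal (\<integral>x. (L x - K)\<^sup>2 \<partial>P)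
      else \<infinity>)"

definition sub_gamma_right :: "'a measure \<Rightarrow> ('a \<Rightarrow> real) \<Rightarrow> real \<Rightarrow> real \<Rightarrow> bool" where
  "sub_gamma_right M V s2 c \<longleftrightarrow>
     integrable M V \<and> (\<integral>x. V x \<partial>M) = 0 \<and>
     (\<forall>l. 0 \<le> l \<and> l < 1 / c \<longrightarrow>
        (\<integral>\<^sup>+x. ennreal (exp (l * V x)) \<partial>M) \<le> ennreal (exp (s2 * l\<^sup>2 / (2 * (1 - c * l)))))"

definition sub_gamma_left :: "'a measure \<Rightarrow> ('a \<Rightarrow> real) \<Rightarrow> real \<Rightarrow> real \<Rightarrow> bool" where
  "sub_gamma_left M V s2 c \<longleftrightarrow> sub_gamma_right M (\<lambda>x. - V x) s2 c"

end

theory Submission imports Defs begin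


lemma powr_neg_convex: assumes "l > 0" shows "convex_on {0<..} (\<lambda>x::real. x powr (-l))"
proof (rule f''_ge0_imp_convex[where f'="\<lambda>x. -l * x powr (-l-1)" and f''="\<lambda>x. (-l) * ((-l-1) * x powr (-l-1-1))"])
  show "convex ({0<..} :: real set)" by simp
  fix x :: real assume x: "x \<in> {0<..}"
  show "((\<lambda>x. x powr (-l)) has_real_derivative -l * x powr (-l-1)) (at x)"
    using x has_real_derivative_powr[of x "-l"] by simp
  show "((\<lambda>x. -l * x powr (-l-1)) has_real_derivative (-l) * ((-l-1) * x powr (-l-1-1))) (at x)"
    using x by (intro DERIV_cmult has_real_derivative_powr) simp
  show "0 \<le> (-l) * ((-l-1) * x powr (-l-1-1))" proof -
    have "(-l) * ((-l-1) * x powr (-l-1-1)) = l*(l+1) * x powr (-l-1-1)" by (simp add: algebra_simps)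
    also have "\<dots> \<ge> 0" using assms by simp
    finally show ?thesis .
  qed
qed

lemma jensen_neg_pow:
  fixes g :: "'a \<Rightarrow> real"
  assumes M: "prob_space M" and g[measurable]: "g \<in> borel_measurable M"
    and gnn: "\<forall>x\<in>space M. 0 \<le> g x" and t: "0 < t" and l: "0 < l"
    and lt: "(\<integral>\<^sup>+x. ennreal (g x) \<partial>M) < ennreal t"
  shows "ennreal (t powr (-l)) \<le> (\<integral>\<^sup>+x. (if g x = 0 then \<infinity> else ennreal (g x powr (-l))) \<partial>M)"
proof -
  interpret prob_space M by fact
  let ?G = "\<lambda>x. (if g x = 0 then \<infinity> else ennreal (g x powr (-l)))"
  show ?thesis
  proof (cases "AE x in M. g x \<noteq> 0")
    case False
    let ?S = "{x\<in>space M. g x = 0}"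
    have S: "?S \<in> sets M" by measurable
    have "emeasure M ?S \<noteq> 0"
    proof
      assume "emeasure M ?S = 0"
      then have "AE x in M. x \<notin> ?S" using S by (intro AE_I[of _ _ ?S]) auto
      then have "AE x in M. g x \<noteq> 0" using AE_space by eventually_elim auto
      then show False using False by blast
    qed
    have "(\<integral>\<^sup>+x. \<infinity> * indicator ?S x \<partial>M) \<le> (\<integral>\<^sup>+x. ?G x \<partial>M)"
      by (intro nn_integral_mono) (auto split: split_indicator)
    moreover have "(\<integral>\<^sup>+x. \<infinity> * indicator ?S x \<partial>M) = \<infinity>"
      using \<open>emeasure M ?S \<noteq> 0\<close> S by (simp add: nn_integral_cmult_indicator ennreal_mult_top)
    ultimately show ?thesis by (simp add: top_unique)
  next
    case True
    have AEpos: "AE x in M. 0 < g x" using True AE_space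
      by eventually_elim (use gnn in \<open>auto simp: less_le\<close>)
    have eqG: "(\<integral>\<^sup>+x. ?G x \<partial>M) = (\<integral>\<^sup>+x. ennreal (g x powr (-l)) \<partial>M)"
      using True by (intro nn_integral_cong_AE) (auto elim: eventually_mono)
    show ?thesis
    proof (cases "integrable M (\<lambda>x. g x powr (-l))")
      case False
      then have "(\<integral>\<^sup>+x. ennreal (g x powr (-l)) \<partial>M) = \<infinity>"
        by (simp add: integrable_iff_bounded) (metis less_top)
      then show ?thesis using eqG by simp
    next
      case True
      have gint: "integrable M g"
      proof (rule integrableI_nonneg)
        show "AE x in M. 0 \<le> g x" using gnn by (intro AE_I2) auto
        show "(\<integral>\<^sup>+x. ennreal (g x) \<partial>M) < \<infinity>" using lt by (rule order.strict_trans) simp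
      qed simp
      have eqg: "(\<integral>\<^sup>+x. ennreal (g x) \<partial>M) = ennreal (expectation g)"
        using gint gnn by (intro nn_integral_eq_integral) auto
      have Enn: "0 \<le> expectation g" using gnn by (intro integral_nonneg_AE AE_I2) auto
      have Egt: "expectation g < t" using lt eqg Enn ennreal_less_iff by metis
      have "expectation g \<noteq> 0"
      proof
        assume "expectation g = 0"
        then have "AE x in M. g x = 0" using gint gnn integral_nonneg_eq_0_iff_AE[of M g]
          by (auto intro: AE_I2)
        with \<open>AE x in M. g x \<noteq> 0\<close> have "AE x in M. False" by eventually_elim auto
        then show False by simp
      qed
      with Enn have Epos: "0 < expectation g" by simp
      have "t powr (-l) \<le> expectation g powr (-l)"
        using Egt Epos l by (intro powr_mono2') auto
      also have "\<dots> \<le> expectation (\<lambda>x. g x powr (-l))"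
        using gint AEpos True powr_neg_convex[OF l]
        by (intro jensens_inequality[where I="{0<..}"]) auto
      finally have "ennreal (t powr (-l)) \<le> ennreal (expectation (\<lambda>x. g x powr (-l)))"
        by (rule ennreal_leI)
      also have "\<dots> = (\<integral>\<^sup>+x. ennreal (g x powr (-l)) \<partial>M)"
        using True by (intro nn_integral_eq_integral[symmetric]) auto
      finally show ?thesis using eqG by simp
    qed
  qed
qed


lemma per_P:
  fixes p :: "'z \<Rightarrow> real"
  assumes P0: "prob_space P0" and P: "prob_space P" and sP: "sets P = sets P0"
    and pm[measurable]: "p \<in> borel_measurable P0" and pnn: "\<forall>z\<in>space P0. 0 \<le> p z"
    and dens: "P = density P0 (\<lambda>z. ennreal (p z))"
    and KL: "KL_div P0 P \<le> ereal e2"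
    and sg: "sub_gamma_left P0 (\<lambda>z. ln (p z) - (\<integral>x. ln (p x) \<partial>P0)) s2 c"
    and l: "0 \<le> l" "l < 1 / c"
  shows "(\<integral>\<^sup>+z. (if p z = 0 then \<infinity> else ennreal (p z powr (-l))) \<partial>P0)
          \<le> ennreal (exp (l * e2 + s2 * l\<^sup>2 / (2 * (1 - c * l))))"
proof -
  interpret P0: prob_space P0 by fact
  interpret P: prob_space P by fact
  define m where "m = (\<integral>x. ln (p x) \<partial>P0)"
  from KL have ac: "absolutely_continuous P P0"
    and KLle: "(\<integral>x. ln (enn2real (RN_deriv P P0 x)) \<partial>P0) \<le> e2"
    unfolding KL_div_def by (auto split: if_splits)
  let ?S = "{z\<in>space P0. p z = 0}"
  have S: "?S \<in> sets P0" by measurable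
  have "emeasure P ?S = (\<integral>\<^sup>+z\<in>?S. ennreal (p z) \<partial>P0)"
    using S by (simp add: dens emeasure_density)
  also have "\<dots> = 0"
    by (rule nn_integral_zero') (auto split: split_indicator)
  finally have "?S \<in> null_sets P" using S sP by auto
  then have "?S \<in> null_sets P0" using ac unfolding absolutely_continuous_def by auto
  then have AEnz: "AE z in P0. p z \<noteq> 0"
    by (rule AE_I') auto
  then have AEpos: "AE z in P0. 0 < p z" using AE_space
    by eventually_elim (use pnn in \<open>auto simp: less_le\<close>)
  have "density P (\<lambda>z. ennreal (1 / p z)) = density P0 (\<lambda>z. ennreal (p z) * ennreal (1 / p z))"
    unfolding dens by (rule density_density_eq) auto
  also have "\<dots> = density P0 (\<lambda>_. 1)"
    using AEpos by (intro density_cong) (auto elim!: eventually_mono simp: ennreal_mult'[symmetric])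
  also have "\<dots> = P0" by (rule density_1)
  finally have dP: "density P (\<lambda>z. ennreal (1 / p z)) = P0" .
  have "AE z in P. ennreal (1 / p z) = RN_deriv P P0 z"
    by (rule P.RN_deriv_unique[OF _ dP]) (simp add: measurable_cong_sets[OF sP refl])
  then have AERN: "AE z in P0. ennreal (1 / p z) = RN_deriv P P0 z"
    unfolding dP[symmetric]
    by (subst AE_density) (auto simp add: measurable_cong_sets[OF sP refl] elim!: eventually_mono)
  have "(\<integral>x. ln (enn2real (RN_deriv P P0 x)) \<partial>P0) = (\<integral>x. - ln (p x) \<partial>P0)"
  proof (rule integral_cong_AE)
    have "RN_deriv P P0 \<in> borel_measurable P0"
      using borel_measurable_RN_deriv[of P P0] measurable_cong_sets[OF sP refl] by blast
    then show "(\<lambda>x. ln (enn2real (RN_deriv P P0 x))) \<in> borel_measurable P0" by measurable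
    show "(\<lambda>x. - ln (p x)) \<in> borel_measurable P0" by measurable
    show "AE x in P0. ln (enn2real (RN_deriv P P0 x)) = - ln (p x)"
      using AERN AEpos proof eventually_elim
      case (elim x)
      then have "RN_deriv P P0 x = ennreal (1 / p x)" by simp
      then have "enn2real (RN_deriv P P0 x) = 1 / p x" using elim(2) by simp
      then show ?case using elim(2) by (simp add: ln_div)
    qed
  qed
  also have "\<dots> = - m" unfolding m_def by simp
  finally have mge: "- e2 \<le> m" using KLle by simp
  from sg have mgf: "(\<integral>\<^sup>+x. ennreal (exp (l * - (ln (p x) - m))) \<partial>P0)
      \<le> ennreal (exp (s2 * l\<^sup>2 / (2 * (1 - c * l))))"
    using l unfolding sub_gamma_left_def sub_gamma_right_def m_def by blast
  have "(\<integral>\<^sup>+z. (if p z = 0 then \<infinity> else ennreal (p z powr (-l))) \<partial>P0)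
      = (\<integral>\<^sup>+z. ennreal (exp (- l * m)) * ennreal (exp (l * - (ln (p z) - m))) \<partial>P0)"
  proof (intro nn_integral_cong_AE)
    show "AE z in P0. (if p z = 0 then \<infinity> else ennreal (p z powr (-l)))
        = ennreal (exp (- l * m)) * ennreal (exp (l * - (ln (p z) - m)))"
      using AEpos
    proof eventually_elim
      case (elim z)
      have "p z powr (-l) = exp (- l * m) * exp (l * - (ln (p z) - m))"
        using elim by (simp add: powr_def exp_add[symmetric] algebra_simps)
      then show ?case using elim by (simp add: ennreal_mult'[symmetric])
    qed
  qed
  also have "\<dots> = ennreal (exp (- l * m)) * (\<integral>\<^sup>+x. ennreal (exp (l * - (ln (p x) - m))) \<partial>P0)"
    by (rule nn_integral_cmult) measurable
  also have "\<dots> \<le> ennreal (exp (- l * m)) * ennreal (exp (s2 * l\<^sup>2 / (2 * (1 - c * l))))"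
    by (rule mult_left_mono[OF mgf]) simp
  also have "\<dots> \<le> ennreal (exp (l * e2)) * ennreal (exp (s2 * l\<^sup>2 / (2 * (1 - c * l))))"
  proof (intro mult_right_mono ennreal_leI)
    show "exp (- l * m) \<le> exp (l * e2)" using mult_left_mono[OF mge l(1)] by simp
  qed simp
  also have "\<dots> = ennreal (exp (l * e2 + s2 * l\<^sup>2 / (2 * (1 - c * l))))"
    by (simp add: ennreal_mult'[symmetric] exp_add)
  finally show ?thesis .
qed

lemma arith13:
  fixes a c D e2 :: real and n :: nat
  assumes a: "a > 0" and c: "c > 0" and D: "D > 0"
  defines "l \<equiv> D / (a + c * D)"
  shows "exp (- (1 + D) * real n * e2) powr l * (exp (l * e2 + a * e2 * l\<^sup>2 / (2 * (1 - c * l)))) ^ n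
     = exp (- (D\<^sup>2 * real n * e2) / (2 * (a + c * D)))"
proof -
  have pos: "a + c * D > 0" using a c D by (simp add: add_pos_pos)
  have one: "1 - c * l = a / (a + c * D)" using pos unfolding l_def by (simp add: field_simps)
  have "exp (- (1 + D) * real n * e2) powr l * (exp (l * e2 + a * e2 * l\<^sup>2 / (2 * (1 - c * l)))) ^ n
      = exp (l * (- (1 + D) * real n * e2) + real n * (l * e2 + a * e2 * l\<^sup>2 / (2 * (1 - c * l))))"
    by (simp add: powr_def exp_add exp_of_nat_mult)
  also have "l * (- (1 + D) * real n * e2) + real n * (l * e2 + a * e2 * l\<^sup>2 / (2 * (1 - c * l)))
      = - (D\<^sup>2 * real n * e2) / (2 * (a + c * D))"
  proof -
    have h1: "a * e2 * l\<^sup>2 / (2 * (1 - c * l)) = e2 * D\<^sup>2 / (2 * (a + c * D))"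
    proof -
      have gen: "a * e2 * (D / s)\<^sup>2 / (2 * (a / s)) = e2 * D\<^sup>2 / (2 * s)" if "s \<noteq> 0" for s
        using that a by (simp add: field_simps power2_eq_square)
      show ?thesis unfolding one using gen[of "a + c * D"] pos unfolding l_def by simp
    qed
    have gen2: "(D / s) * (- (1 + D) * real n * e2) + real n * ((D / s) * e2 + e2 * D\<^sup>2 / (2 * s))
        = - (D\<^sup>2 * real n * e2) / (2 * s)" if "s \<noteq> 0" for s
      using that by (simp add: field_simps power2_eq_square)
    show ?thesis unfolding h1 using gen2[of "a + c * D"] pos unfolding l_def by simp
  qed
  finally show ?thesis .
qed
theorem lemma13:
  fixes P0 :: "'z measure" and Pr :: "'z measure measure"
    and p :: "'z measure \<Rightarrow> 'z \<Rightarrow> real"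
    and B :: "'z measure set"
    and n :: nat and \<epsilon> a c D :: real
  assumes P0: "prob_space P0"
    and Pi: "prob_space Pr"
    and space_Pi: "\<forall>P\<in>space Pr. prob_space P \<and> sets P = sets P0"
    and p_meas: "(\<lambda>(P, z). p P z) \<in> borel_measurable (Pr \<Otimes>\<^sub>M P0)"
    and p_nonneg: "\<forall>P\<in>space Pr. \<forall>z\<in>space P0. 0 \<le> p P z"
    and p_RN: "\<forall>P\<in>space Pr. absolutely_continuous P0 P \<longrightarrow> P = density P0 (\<lambda>z. ennreal (p P z))"
    and eps: "\<epsilon> > 0" and a: "a > 0" and c: "c > 0" and D: "D > 0"
    and B_def: "B = {P \<in> space Pr. KL_div P0 P \<le> ereal (\<epsilon>\<^sup>2) \<and> V2_div P0 P \<le> ereal (\<epsilon>\<^sup>2)}"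
    and B_meas: "B \<in> sets Pr"
    and subgamma: "\<forall>P\<in>B. absolutely_continuous P0 P \<and>
        sub_gamma_left P0 (\<lambda>z. ln (p P z) - (\<integral>x. ln (p P x) \<partial>P0)) (a * \<epsilon>\<^sup>2) c"
  shows "emeasure (PiM {..<n} (\<lambda>_. P0))
           {\<omega> \<in> space (PiM {..<n} (\<lambda>_. P0)).
              (\<integral>\<^sup>+P\<in>B. (\<Prod>i<n. ennreal (p P (\<omega> i))) \<partial>Pr)
                < emeasure Pr B * ennreal (exp (- (1 + D) * real n * \<epsilon>\<^sup>2))}
         \<le> ennreal (exp (- (D\<^sup>2 * real n * \<epsilon>\<^sup>2) / (2 * (a + c * D))))"
proof -
  interpret P0: prob_space P0 by fact
  interpret Pr: prob_space Pr by fact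
  define Q where "Q = PiM {..<n} (\<lambda>_. P0)"
  interpret PP: product_prob_space "\<lambda>_. P0" "{..<n}"
    by (rule product_prob_spaceI) (rule P0)
  interpret Qp: prob_space Q unfolding Q_def by (rule prob_space_PiM) (rule P0)
  define \<beta> where "\<beta> = emeasure Pr B"
  define t where "t = exp (- (1 + D) * real n * \<epsilon>\<^sup>2)"
  define E where "E = {\<omega> \<in> space Q. (\<integral>\<^sup>+P\<in>B. (\<Prod>i<n. ennreal (p P (\<omega> i))) \<partial>Pr) < \<beta> * ennreal t}"
  have pm2[measurable (raw)]: "(\<lambda>x. p (f x) (g x)) \<in> borel_measurable N"
    if "f \<in> measurable N Pr" "g \<in> measurable N P0" for f g and N :: "'b measure"
    using measurable_compose[OF measurable_Pair[OF that] p_meas] by simp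
  have goal: "emeasure Q E \<le> ennreal (exp (- (D\<^sup>2 * real n * \<epsilon>\<^sup>2) / (2 * (a + c * D))))"
  proof (cases "\<beta> = 0")
    case True
    then have "E = {}" unfolding E_def by simp
    then show ?thesis by simp
  next
    case False
    have \<beta>fin: "\<beta> \<noteq> \<infinity>" unfolding \<beta>_def by simp
    define \<mu> where "\<mu> = uniform_measure Pr B"
    interpret mu: prob_space \<mu> unfolding \<mu>_def
      using False \<beta>fin unfolding \<beta>_def by (intro prob_space_uniform_measure) auto
    have [simp]: "sets \<mu> = sets Pr" "space \<mu> = space Pr" unfolding \<mu>_def by auto
    define l where "l = D / (a + c * D)"
    have pos: "a + c * D > 0" using a c D by (simp add: add_pos_pos)
    have l0: "0 < l" unfolding l_def using D pos by simp
    have l1: "l < 1 / c" unfolding l_def using pos a c D by (simp add: field_simps)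
    define K where "K = exp (l * \<epsilon>\<^sup>2 + a * \<epsilon>\<^sup>2 * l\<^sup>2 / (2 * (1 - c * l)))"
    define H1 where "H1 P z = (if p P z = 0 then \<infinity> else ennreal (p P z powr (-l)))" for P z
    define G where "G \<omega> P = (if (\<Prod>i<n. p P (\<omega> i)) = 0 then \<infinity>
        else ennreal ((\<Prod>i<n. p P (\<omega> i)) powr (-l)))" for \<omega> P
    have Gmeas1: "(\<lambda>(\<omega>, P). G \<omega> P) \<in> borel_measurable (Q \<Otimes>\<^sub>M \<mu>)"
      unfolding G_def Q_def by (simp add: measurable_cong_sets[OF sets_pair_measure_cong[OF refl \<open>sets \<mu> = sets Pr\<close>] refl]) measurable
    have Gmeas2: "(\<lambda>(P, \<omega>). G \<omega> P) \<in> borel_measurable (\<mu> \<Otimes>\<^sub>M Q)"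
      unfolding G_def Q_def by (simp add: measurable_cong_sets[OF sets_pair_measure_cong[OF \<open>sets \<mu> = sets Pr\<close> refl] refl]) measurable
    have pnnQ: "0 \<le> p P (\<omega> i)" if "P \<in> space Pr" "\<omega> \<in> space Q" "i < n" for P \<omega> i
      using p_nonneg that unfolding Q_def by (auto simp: space_PiM PiE_iff)
    have GH: "G \<omega> P = (\<Prod>i<n. H1 P (\<omega> i))" if P: "P \<in> space Pr" and w: "\<omega> \<in> space Q" for \<omega> P
    proof (cases "\<exists>i<n. p P (\<omega> i) = 0")
      case True
      then have "(\<Prod>i<n. p P (\<omega> i)) = 0" by auto
      moreover have "(\<Prod>i<n. H1 P (\<omega> i)) = \<infinity>"
        using True unfolding H1_def infinity_ennreal_def by (subst ennreal_prod_eq_top) auto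
      ultimately show ?thesis unfolding G_def by simp
    next
      case False
      then have nz: "(\<Prod>i<n. p P (\<omega> i)) \<noteq> 0" by auto
      have "(\<Prod>i<n. p P (\<omega> i)) powr (-l) = (\<Prod>i<n. p P (\<omega> i) powr (-l))"
        by (rule prod_powr_distrib)
      then have "G \<omega> P = (\<Prod>i<n. ennreal (p P (\<omega> i) powr (-l)))"
        unfolding G_def using nz by (simp add: prod_ennreal)
      also have "\<dots> = (\<Prod>i<n. H1 P (\<omega> i))"
        using False unfolding H1_def by (intro prod.cong) auto
      finally show ?thesis .
    qed
    define S where "S = {\<omega> \<in> space Q. 1 \<le> ennreal (t powr l) * (\<integral>\<^sup>+P. G \<omega> P \<partial>\<mu>)}"
    have Ymeas: "(\<lambda>\<omega>. \<integral>\<^sup>+P. G \<omega> P \<partial>\<mu>) \<in> borel_measurable Q"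
      using Gmeas1 by (rule mu.borel_measurable_nn_integral)
    have Smeas: "S \<in> sets Q" unfolding S_def using Ymeas by measurable
    have ES: "E \<subseteq> S"
    proof
      fix \<omega> assume "\<omega> \<in> E"
      then have w: "\<omega> \<in> space Q"
        and lt: "(\<integral>\<^sup>+P\<in>B. (\<Prod>i<n. ennreal (p P (\<omega> i))) \<partial>Pr) < \<beta> * ennreal t"
        unfolding E_def by auto
      have gm: "(\<lambda>P. \<Prod>i<n. p P (\<omega> i)) \<in> borel_measurable Pr"
        using w unfolding Q_def by (measurable, auto simp: space_PiM PiE_iff)
      have "(\<integral>\<^sup>+P. ennreal (\<Prod>i<n. p P (\<omega> i)) \<partial>\<mu>)
          = (\<integral>\<^sup>+P. ennreal (\<Prod>i<n. p P (\<omega> i)) * indicator B P \<partial>Pr) / \<beta>"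
        unfolding \<mu>_def \<beta>_def using gm B_meas by (intro nn_integral_uniform_measure) auto
      also have "(\<integral>\<^sup>+P. ennreal (\<Prod>i<n. p P (\<omega> i)) * indicator B P \<partial>Pr)
          = (\<integral>\<^sup>+P\<in>B. (\<Prod>i<n. ennreal (p P (\<omega> i))) \<partial>Pr)"
      proof (intro nn_integral_cong)
        fix P assume P: "P \<in> space Pr"
        show "ennreal (\<Prod>i<n. p P (\<omega> i)) * indicator B P = (\<Prod>i<n. ennreal (p P (\<omega> i))) * indicator B P"
          by (subst prod_ennreal) (auto intro: pnnQ[OF P w])
      qed
      finally have "(\<integral>\<^sup>+P. ennreal (\<Prod>i<n. p P (\<omega> i)) \<partial>\<mu>) < ennreal t"
        using lt False \<beta>fin by (simp add: divide_less_ennreal less_top mult.commute)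
      then have "ennreal (t powr (-l)) \<le> (\<integral>\<^sup>+P. G \<omega> P \<partial>\<mu>)"
        unfolding G_def
      proof (intro jensen_neg_pow)
        show "prob_space \<mu>" by (rule mu.prob_space_axioms)
        show "(\<lambda>P. \<Prod>i<n. p P (\<omega> i)) \<in> borel_measurable \<mu>"
          using gm by (simp add: measurable_cong_sets[OF \<open>sets \<mu> = sets Pr\<close> refl])
        show "\<forall>x\<in>space \<mu>. 0 \<le> (\<Prod>i<n. p x (\<omega> i))"
          using pnnQ w by (auto intro: prod_nonneg)
      qed (use l0 in \<open>auto simp: t_def\<close>)
      then have "ennreal (t powr l) * ennreal (t powr (-l)) \<le> ennreal (t powr l) * (\<integral>\<^sup>+P. G \<omega> P \<partial>\<mu>)"
        by (rule mult_left_mono) simp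
      moreover have "ennreal (t powr l) * ennreal (t powr (-l)) = 1"
        by (simp add: ennreal_mult'[symmetric] powr_add[symmetric] t_def)
      ultimately show "\<omega> \<in> S" unfolding S_def using w by simp
    qed
    have "emeasure Q E \<le> emeasure Q S" using ES Smeas by (rule emeasure_mono)
    also have "\<dots> \<le> ennreal (t powr l) * (\<integral>\<^sup>+\<omega>. (\<integral>\<^sup>+P. G \<omega> P \<partial>\<mu>) * indicator (space Q) \<omega> \<partial>Q)"
      unfolding S_def using nn_integral_Markov_inequality[of "\<lambda>\<omega>. \<integral>\<^sup>+P. G \<omega> P \<partial>\<mu>" "space Q" Q "ennreal (t powr l)"]
        Ymeas by simp
    also have "(\<integral>\<^sup>+\<omega>. (\<integral>\<^sup>+P. G \<omega> P \<partial>\<mu>) * indicator (space Q) \<omega> \<partial>Q) = (\<integral>\<^sup>+\<omega>. (\<integral>\<^sup>+P. G \<omega> P \<partial>\<mu>) \<partial>Q)"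
      by (intro nn_integral_cong) simp
    also have "\<dots> = (\<integral>\<^sup>+P. (\<integral>\<^sup>+\<omega>. G \<omega> P \<partial>Q) \<partial>\<mu>)"
    proof -
      interpret PS: pair_sigma_finite \<mu> Q
        by (intro pair_sigma_finite.intro mu.sigma_finite_measure_axioms Qp.sigma_finite_measure_axioms)
      show ?thesis using PS.Fubini'[of "\<lambda>P \<omega>. G \<omega> P"] Gmeas2 by simp
    qed
    also have "\<dots> \<le> (\<integral>\<^sup>+P. ennreal K ^ n \<partial>\<mu>)"
    proof (rule nn_integral_mono_AE)
      have "AE P in \<mu>. P \<in> B" unfolding \<mu>_def using B_meas by (intro AE_uniform_measureI) auto
      then show "AE P in \<mu>. (\<integral>\<^sup>+\<omega>. G \<omega> P \<partial>Q) \<le> ennreal K ^ n"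
      proof eventually_elim
        case (elim P)
        then have P: "P \<in> space Pr" using B_def by auto
        have H1m: "H1 P \<in> borel_measurable P0" unfolding H1_def using P by measurable
        have "(\<integral>\<^sup>+\<omega>. G \<omega> P \<partial>Q) = (\<integral>\<^sup>+\<omega>. (\<Prod>i<n. H1 P (\<omega> i)) \<partial>Q)"
          using GH P by (intro nn_integral_cong) auto
        also have "\<dots> = (\<Prod>i<n. integral\<^sup>N P0 (H1 P))"
          unfolding Q_def using H1m by (intro PP.product_nn_integral_prod) auto
        also have "\<dots> \<le> (\<Prod>i<n. ennreal K)"
        proof (intro prod_mono_ennreal)
          fix i assume "i \<in> {..<n}"
          have PP0: "prob_space P" "sets P = sets P0" using space_Pi P by auto
          have ac: "absolutely_continuous P0 P" and sg: "sub_gamma_left P0 (\<lambda>z. ln (p P z) - (\<integral>x. ln (p P x) \<partial>P0)) (a * \<epsilon>\<^sup>2) c"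
            using subgamma elim by auto
          have KL: "KL_div P0 P \<le> ereal (\<epsilon>\<^sup>2)" using elim B_def by auto
          have pmP: "p P \<in> borel_measurable P0" using P by measurable
          show "integral\<^sup>N P0 (H1 P) \<le> ennreal K"
            unfolding H1_def K_def
            by (rule per_P[OF P0 PP0 pmP _ _ KL sg]) (use p_nonneg P p_RN ac l0 l1 in auto)
        qed
        also have "\<dots> = ennreal K ^ n" by simp
        finally show ?case .
      qed
    qed
    also have "\<dots> = ennreal K ^ n" using mu.emeasure_space_1 by simp
    finally have "emeasure Q E \<le> ennreal (t powr l) * ennreal K ^ n" by (simp add: mult_left_mono)
    also have "\<dots> = ennreal (t powr l * K ^ n)" by (subst ennreal_mult) (auto simp: K_def ennreal_power)
    also have "t powr l * K ^ n = exp (- (D\<^sup>2 * real n * \<epsilon>\<^sup>2) / (2 * (a + c * D)))"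
      unfolding t_def K_def l_def using arith13[OF a c D, of n "\<epsilon>\<^sup>2"] by simp
    finally show ?thesis .
  qed
  then show ?thesis unfolding Q_def E_def \<beta>_def t_def .
qed
end
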